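(* For fixed $r>1$ and integer $N\ge1$, the quantity $\gamma(r,K,N)$ is nondecreasing in the integer $K\ge1$, where $\gamma(r,K,N)$ is the supremum of $$\frac{p^K}{z^K}\sum_{i=1}^{K-1}\frac{z^i}{\sum_{j=i}^Kp^j}$$ over all $p=(p^1,\dots,p^K)$ with $rp^K\ge1$, $\sum_{i=1}^Kp^i=1$, $p^i>0$ for all $i$, and $z^i=(\sum_{j=1}^ip^j)^N-(\sum_{j=1}^{i-1}p^j)^N$. *)

theory Defs
  imports "HOL-Analysis.Analysis"
begin

text \<open>Vectors p = (p^1,...,p^K) are represented as functions nat => real, only indices 1..K matter.\<close>

definition zval :: "nat \<Rightarrow> (nat \<Rightarrow> real) \<Rightarrow> nat \<Rightarrow> real" where
  "zval N p i = (\<Sum>j=1..i. p j) ^ N - (\<Sum>j=1..i-1. p j) ^ N"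

definition gamma_obj :: "nat \<Rightarrow> nat \<Rightarrow> (nat \<Rightarrow> real) \<Rightarrow> real" where
  "gamma_obj K N p = p K / zval N p K * (\<Sum>i=1..K-1. zval N p i / (\<Sum>j=i..K. p j))"

definition admissible :: "real \<Rightarrow> nat \<Rightarrow> (nat \<Rightarrow> real) \<Rightarrow> bool" where
  "admissible r K p \<longleftrightarrow> r * p K \<ge> 1 \<and> (\<Sum>i=1..K. p i) = 1 \<and> (\<forall>i\<in>{1..K}. p i > 0)"

definition gamma :: "real \<Rightarrow> nat \<Rightarrow> nat \<Rightarrow> ereal" where
  "gamma r K N = (SUP p\<in>{p. admissible r K p}. ereal (gamma_obj K N p))"

end

theory Submission
  imports Defs
begin

definition pext :: "real \<Rightarrow> (nat \<Rightarrow> real) \<Rightarrow> nat \<Rightarrow> real" where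
  "pext e p j = (if j = 1 then e else if j = 2 then p 1 - e else p (j - 1))"

lemma pext_prefix:
  assumes "i \<ge> 1"
  shows "(\<Sum>j=1..Suc i. pext e p j) = (\<Sum>j=1..i. p j)"
  using assms
proof (induction i)
  case 0 then show ?case by simp
next
  case (Suc i)
  show ?case
  proof (cases "i = 0")
    case True
    then show ?thesis by (simp add: pext_def)
  next
    case False
    then have "(\<Sum>j=1..Suc i. pext e p j) = (\<Sum>j=1..i. p j)" using Suc by simp
    then show ?thesis using False by (simp add: pext_def)
  qed
qed

lemma tail_sum:
  fixes p :: "nat \<Rightarrow> real"
  assumes "1 \<le> i" "i \<le> K"
  shows "(\<Sum>j=i..K. p j) = (\<Sum>j=1..K. p j) - (\<Sum>j=1..i-1. p j)"
proof -
  have "{1..K} = {1..i-1} \<union> {i..K}" using assms by auto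
  moreover have "{1..i-1} \<inter> {i..K} = {}" by auto
  ultimately have "(\<Sum>j=1..K. p j) = (\<Sum>j=1..i-1. p j) + (\<Sum>j=i..K. p j)"
    by (simp add: sum.union_disjoint)
  then show ?thesis by simp
qed

lemma prefix_mono:
  fixes p :: "nat \<Rightarrow> real"
  assumes "\<forall>j\<in>{1..K}. p j > 0" "a \<le> b" "b \<le> K"
  shows "(\<Sum>j=1..a. p j) \<le> (\<Sum>j=1..b. p j)"
  using assms by (intro sum_mono2) (auto intro: less_imp_le)

lemma prefix_nonneg:
  fixes p :: "nat \<Rightarrow> real"
  assumes "\<forall>j\<in>{1..K}. p j > 0" "a \<le> K"
  shows "0 \<le> (\<Sum>j=1..a. p j)"
  using assms by (intro sum_nonneg) (auto intro: less_imp_le)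

lemma obj_nonneg:
  assumes "admissible r K p" "K \<ge> 1"
  shows "gamma_obj K N p \<ge> 0"
proof -
  have pos: "\<forall>j\<in>{1..K}. p j > 0" using assms by (simp add: admissible_def)
  have z: "zval N p i \<ge> 0" if "i \<in> {1..K}" for i
  proof -
    have "(\<Sum>j=1..i-1. p j) \<le> (\<Sum>j=1..i. p j)" using prefix_mono[OF pos, of "i-1" i] that by auto
    moreover have "0 \<le> (\<Sum>j=1..i-1. p j)" using prefix_nonneg[OF pos, of "i-1"] that by auto
    ultimately show ?thesis unfolding zval_def by (simp add: power_mono)
  qed
  have s: "(\<Sum>j=i..K. p j) \<ge> 0" if "i \<ge> 1" for i using pos that by (intro sum_nonneg) (auto intro: less_imp_le)
  have "p K \<ge> 0" using pos assms(2) by (auto intro: less_imp_le)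
  moreover have "zval N p K \<ge> 0" proof (cases "K = 0")
    case True then show ?thesis by (simp add: zval_def)
  qed (use z in auto)
  moreover have "(\<Sum>i=1..K-1. zval N p i / (\<Sum>j=i..K. p j)) \<ge> 0"
    by (rule sum_nonneg) (use z s in auto)
  ultimately show ?thesis unfolding gamma_obj_def by simp
qed

lemma main_step:
  fixes r :: real and N K :: nat and p :: "nat \<Rightarrow> real"
  assumes r: "r > 1" and N: "N \<ge> 1" and K: "K \<ge> 1" and adm: "admissible r K p"
  shows "\<exists>q. admissible r (K+1) q \<and> gamma_obj K N p \<le> gamma_obj (K+1) N q"
proof -
  have pos: "\<forall>j\<in>{1..K}. p j > 0" and tot: "(\<Sum>j=1..K. p j) = 1" and rK: "r * p K \<ge> 1"
    using adm by (auto simp: admissible_def)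
  define e where "e = min (p 1 / 2) ((1 - 1/r)/2)"
  define q where "q = pext e p"
  have p1: "p 1 > 0" using pos K by auto
  have rr: "1/r < 1" "1/r > 0" using r by auto
  have e0: "e > 0" unfolding e_def using p1 rr by auto
  have ep: "e < p 1" unfolding e_def using p1 by auto
  have e1a: "e \<le> (1 - 1/r)/2" unfolding e_def by (rule min.cobounded2)
  then have e1: "2 * e \<le> 1 - 1/r" by simp
  have Cq: "(\<Sum>j=1..Suc i. q j) = (\<Sum>j=1..i. p j)" if "i \<ge> 1" for i
    unfolding q_def using pext_prefix[OF that] .
  have Cq1: "(\<Sum>j=1..1. q j) = e" by (simp add: q_def pext_def)
  have Cq0: "(\<Sum>j=1..0. q j) = 0" by simp
  have qtot: "(\<Sum>j=1..K+1. q j) = 1" using Cq[OF K] tot by simp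
  have qpos: "\<forall>j\<in>{1..K+1}. q j > 0"
  proof
    fix j assume j: "j \<in> {1..K+1}"
    show "q j > 0"
    proof (cases "j = 1 \<or> j = 2")
      case True then show ?thesis using e0 ep by (auto simp: q_def pext_def)
    next
      case False
      then have "j - 1 \<in> {1..K}" using j by auto
      then show ?thesis using pos False by (auto simp: q_def pext_def)
    qed
  qed
  have qadm: "admissible r (K+1) q"
  proof -
    have "r * q (K+1) \<ge> 1"
    proof (cases "K = 1")
      case True
      then have "p 1 = 1" using tot by simp
      then have "q (K+1) = 1 - e" using True by (simp add: q_def pext_def)
      moreover have "1 - e \<ge> 1/r" using e1 rr by linarith
      ultimately have "r * q (K+1) \<ge> r * (1/r)" using r by (metis less_le_not_le mult_le_cancel_left_pos zero_less_one order.strict_trans)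
      then show ?thesis using r by simp
    next
      case False
      then have "q (K+1) = p K" using K by (simp add: q_def pext_def)
      then show ?thesis using rK by simp
    qed
    then show ?thesis using qtot qpos by (simp add: admissible_def)
  qed
  have ineq: "gamma_obj K N p \<le> gamma_obj (K+1) N q"
  proof (cases "K = 1")
    case True
    then have "gamma_obj K N p = 0" by (simp add: gamma_obj_def)
    then show ?thesis using obj_nonneg[OF qadm] by simp
  next
    case False
    then have K2: "K \<ge> 2" using K by simp
    define g where "g i = zval N p i / (\<Sum>j=i..K. p j)" for i
    define g' where "g' i = zval N q i / (\<Sum>j=i..K+1. q j)" for i
    have S: "(\<Sum>j=i..K. p j) = 1 - (\<Sum>j=1..i-1. p j)" if "1 \<le> i" "i \<le> K" for i
      using tail_sum[OF that] tot by simp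
    have S': "(\<Sum>j=i..K+1. q j) = 1 - (\<Sum>j=1..i-1. q j)" if "1 \<le> i" "i \<le> K+1" for i
      using tail_sum[OF that, of q] qtot by simp
    have Cqi: "(\<Sum>j=1..i. q j) = (\<Sum>j=1..i-1. p j)" if "i \<ge> 2" for i
      using Cq[of "i-1"] that by (simp add: Suc_diff_Suc numeral_2_eq_2)
    have zsh: "zval N q (Suc i) = zval N p i" if "i \<ge> 2" for i
      unfolding zval_def using Cqi[OF that] Cq[of i] that by simp
    have gsh: "g' (Suc i) = g i" if "2 \<le> i" "i \<le> K" for i
    proof -
      have "(\<Sum>j=Suc i..K+1. q j) = (\<Sum>j=i..K. p j)"
        using S'[of "Suc i"] S[of i] Cqi[of i] that by simp
      then show ?thesis unfolding g_def g'_def using zsh[OF that(1)] by simp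
    qed
    have 0: "(0::real) ^ N = 0" using N by simp
    have g1: "g 1 = p 1 ^ N" unfolding g_def zval_def using S[of 1] K 0 by simp
    have g'1: "g' 1 = e ^ N" unfolding g'_def zval_def using S'[of 1] Cq1 0 by simp
    have g'2: "g' 2 = (p 1 ^ N - e ^ N) / (1 - e)"
    proof -
      have "(\<Sum>j=1..2. q j) = p 1" using Cq[of 1] by (simp add: numeral_2_eq_2)
      moreover have "(\<Sum>j=2..K+1. q j) = 1 - e" using S'[of 2] K Cq1 by simp
      ultimately show ?thesis unfolding g'_def zval_def using Cq1 by simp
    qed
    have key: "g 1 \<le> g' 1 + g' 2"
    proof -
      have a: "p 1 ^ N - e ^ N \<ge> 0" using e0 ep by (simp add: power_mono)
      have e1': "e < 1" using e1 rr by linarith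
      have "p 1 ^ N - e ^ N \<le> (p 1 ^ N - e ^ N) / (1 - e)"
        using a e0 e1' by (simp add: le_divide_eq mult_left_le)
      then show ?thesis using g1 g'1 g'2 by simp
    qed
    have sp: "(\<Sum>i=1..K-1. g i) = g 1 + (\<Sum>i=2..K-1. g i)"
      using K2 by (simp add: sum.atLeast_Suc_atMost numeral_2_eq_2)
    have sq: "(\<Sum>i=1..K. g' i) = g' 1 + g' 2 + (\<Sum>i=3..K. g' i)"
      using K2 by (simp add: sum.atLeast_Suc_atMost numeral_2_eq_2 numeral_3_eq_3)
    have shift: "(\<Sum>i=3..K. g' i) = (\<Sum>i=2..K-1. g i)"
    proof -
      have "(\<Sum>i=3..K. g' i) = (\<Sum>i=Suc 2..Suc (K-1). g' i)" using K2 by simp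
      also have "\<dots> = (\<Sum>i=2..K-1. g' (Suc i))" by (rule sum.shift_bounds_cl_Suc_ivl)
      also have "\<dots> = (\<Sum>i=2..K-1. g i)" by (rule sum.cong) (use gsh in auto)
      finally show ?thesis .
    qed
    have sums: "(\<Sum>i=1..K-1. g i) \<le> (\<Sum>i=1..K. g' i)"
      using sp sq shift key by simp
    have pre: "q (K+1) / zval N q (K+1) = p K / zval N p K"
      using zsh[OF K2] K2 by (simp add: q_def pext_def)
    have pre0: "p K / zval N p K \<ge> 0"
    proof -
      have "(\<Sum>j=1..K-1. p j) \<le> (\<Sum>j=1..K. p j)" using prefix_mono[OF pos, of "K-1" K] by simp
      moreover have "0 \<le> (\<Sum>j=1..K-1. p j)" using prefix_nonneg[OF pos, of "K-1"] by simp
      ultimately have "zval N p K \<ge> 0" unfolding zval_def by (simp add: power_mono)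
      moreover have "p K > 0" using pos K by auto
      ultimately show ?thesis by simp
    qed
    have "gamma_obj K N p = p K / zval N p K * (\<Sum>i=1..K-1. g i)"
      unfolding gamma_obj_def g_def by simp
    also have "\<dots> \<le> p K / zval N p K * (\<Sum>i=1..K. g' i)"
      using sums pre0 by (rule mult_left_mono)
    also have "\<dots> = gamma_obj (K+1) N q"
      unfolding gamma_obj_def g'_def using pre by simp
    finally show ?thesis .
  qed
  show ?thesis using qadm ineq by blast
qed

theorem lemma3:
  fixes r :: real and N K :: nat
  assumes "r > 1" and "N \<ge> 1" and "K \<ge> 1"
  shows "gamma r K N \<le> gamma r (K + 1) N"
  unfolding gamma_def
proof (rule SUP_least)
  fix p assume "p \<in> {p. admissible r K p}"
  then obtain q where q: "admissible r (K+1) q" "gamma_obj K N p \<le> gamma_obj (K+1) N q"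
    using main_step[OF assms] by blast
  show "ereal (gamma_obj K N p) \<le> (SUP p\<in>{p. admissible r (K + 1) p}. ereal (gamma_obj (K + 1) N p))"
    by (rule SUP_upper2[of q]) (use q in auto)
qed

end
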